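(* In the setting of the one-step SNA update below, assume (A1) $T\nu\le\frac14$ and work on the event $\mathcal E=\{\|X^\top\eta\|_\infty/n\le\lambda_u\}$. Let $\kappa=8/5$ and $\tau\in\{\kappa,\kappa+1\}$, and for $\lambda>0$ let $S_{\lambda,\tau}=\{i:|\beta^\dagger_i|\ge\lambda\tau\}$. Let $\bar\lambda=\frac{9}{10}\lambda+\delta_u<\lambda$. Given $(\beta^k,d^k)$ with $A^k=\{i:|\beta^k_i+d^k_i|>\lambda\}$, compute $(\beta^{k+1},d^{k+1})$ by one SNA step and set $A^{k+1}=\{i:|\beta^{k+1}_i+d^{k+1}_i|>\lambda\}$. Let $E^k=A^\dagger\setminus A^k$ and $i_k\in\arg\max_{i\in E^k}|\beta^\dagger_i|$ (similarly $i_{k+1}$ for $E^{k+1}$, with value $0$ if the set is empty). Then: (i) if $S_{\lambda,\tau}\subseteq A^k\subseteq A^\dagger$, then $S_{\lambda,\tau}\subseteq A^{k+1}\subseteq A^\dagger$; (ii) if $S_{\lambda,\kappa+1}\subseteq A^k\subseteq A^\dagger$ and $S_{\lambda,\kappa}\not\subseteq A^k$, then $|\beta^\dagger_{i_k}|>|\beta^\dagger_{i_{k+1}}|$.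
   Context: Model $y=X\beta^\dagger+\eta$, $X\in\mathbb{R}^{n\times p}$ with $\|X_j\|_2^2=n$; $A^\dagger=\operatorname{supp}(\beta^\dagger)$, $T=|A^\dagger|$; $\nu=\max_{i\ne j}|(X^\top X)_{ij}|/n$; $\lambda_u=\sigma\sqrt{2\log(p)/n}$, $\delta_u=3\lambda_u$. One SNA step (with $\alpha=0$) from $(\beta^k,d^k)$: with $B^k=(A^k)^c$, $\beta^{k+1}_{B^k}=0$, $d^{k+1}_{A^k}=(\lambda-\bar\lambda)\operatorname{sgn}(\beta^k_{A^k}+d^k_{A^k})$, $\beta^{k+1}_{A^k}=(X_{A^k}^\top X_{A^k})^{-1}(X_{A^k}^\top y-nd^{k+1}_{A^k})$, $d^{k+1}_{B^k}=X_{B^k}^\top(y-X_{A^k}\beta^{k+1}_{A^k})/n$. *)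

theory Defs
  imports Complex_Main
begin

text \<open>Design matrix X is n x p, given as a function with row index i < n and
column index j < p. Vectors in R^p / R^n are functions nat => real, only
indices below p / n matter.\<close>

definition gram :: "nat \<Rightarrow> (nat \<Rightarrow> nat \<Rightarrow> real) \<Rightarrow> nat \<Rightarrow> nat \<Rightarrow> real" where
  "gram n X i j = (\<Sum>k<n. X k i * X k j)"

definition mutual_coh :: "nat \<Rightarrow> nat \<Rightarrow> (nat \<Rightarrow> nat \<Rightarrow> real) \<Rightarrow> real" where
  "mutual_coh n p X = Max (insert 0 {\<bar>gram n X i j\<bar> / real n | i j. i < p \<and> j < p \<and> i \<noteq> j})"

definition supp_set :: "nat \<Rightarrow> (nat \<Rightarrow> real) \<Rightarrow> nat set" where
  "supp_set p b = {j. j < p \<and> b j \<noteq> 0}"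

definition lambda_u :: "real \<Rightarrow> nat \<Rightarrow> nat \<Rightarrow> real" where
  "lambda_u \<sigma> n p = \<sigma> * sqrt (2 * ln (real p) / real n)"

definition delta_u :: "real \<Rightarrow> nat \<Rightarrow> nat \<Rightarrow> real" where
  "delta_u \<sigma> n p = 3 * lambda_u \<sigma> n p"

definition active_set :: "nat \<Rightarrow> real \<Rightarrow> (nat \<Rightarrow> real) \<Rightarrow> (nat \<Rightarrow> real) \<Rightarrow> nat set" where
  "active_set p lam b d = {i. i < p \<and> \<bar>b i + d i\<bar> > lam}"

definition S_set :: "nat \<Rightarrow> (nat \<Rightarrow> real) \<Rightarrow> real \<Rightarrow> real \<Rightarrow> nat set" where
  "S_set p bd lam \<tau> = {i. i < p \<and> \<bar>bd i\<bar> \<ge> lam * \<tau>}"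

definition max_abs_on :: "(nat \<Rightarrow> real) \<Rightarrow> nat set \<Rightarrow> real" where
  "max_abs_on b E = (if E = {} then 0 else Max ((\<lambda>i. \<bar>b i\<bar>) ` E))"

text \<open>The restricted least-squares part
b'_A = (X_A^T X_A)^{-1} (X_A^T y - n d'_A) is expressed by the (equivalent, when
X_A^T X_A is invertible) normal equations X_A^T X_A b'_A = X_A^T y - n d'_A.\<close>
definition sna_step ::
  "nat \<Rightarrow> nat \<Rightarrow> (nat \<Rightarrow> nat \<Rightarrow> real) \<Rightarrow> (nat \<Rightarrow> real) \<Rightarrow> real \<Rightarrow> real \<Rightarrow>
   (nat \<Rightarrow> real) \<Rightarrow> (nat \<Rightarrow> real) \<Rightarrow> (nat \<Rightarrow> real) \<Rightarrow> (nat \<Rightarrow> real) \<Rightarrow> bool" where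
  "sna_step n p X y lam lambar b d b' d' \<longleftrightarrow>
     (let A = active_set p lam b d in
       (\<forall>j<p. j \<notin> A \<longrightarrow> b' j = 0) \<and>
       (\<forall>j\<in>A. d' j = (lam - lambar) * sgn (b j + d j)) \<and>
       (\<forall>j\<in>A. (\<Sum>l\<in>A. gram n X j l * b' l) = (\<Sum>i<n. X i j * y i) - real n * d' j) \<and>
       (\<forall>j<p. j \<notin> A \<longrightarrow>
          d' j = (\<Sum>i<n. X i j * (y i - (\<Sum>l\<in>A. X i l * b' l))) / real n))"

end

theory Submission
  imports Defs
begin


lemma sum_abs_bound:
  fixes f :: "nat \<Rightarrow> real"
  assumes "\<And>l. l \<in> S \<Longrightarrow> \<bar>f l\<bar> \<le> K"
  shows "\<bar>sum f S\<bar> \<le> real (card S) * K"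
proof -
  have "\<bar>sum f S\<bar> \<le> (\<Sum>l\<in>S. \<bar>f l\<bar>)" by (rule sum_abs)
  also have "\<dots> \<le> of_nat (card S) * K" using assms by (rule sum_bounded_above)
  finally show ?thesis by simp
qed

lemma max_abs_on_ge: "finite E \<Longrightarrow> i \<in> E \<Longrightarrow> \<bar>f i\<bar> \<le> max_abs_on f E"
  unfolding max_abs_on_def by auto

lemma max_abs_on_nonneg: "finite E \<Longrightarrow> 0 \<le> max_abs_on f E"
proof (cases "E = {}")
  case True then show ?thesis by (simp add: max_abs_on_def)
next
  case False
  assume fE: "finite E"
  from False obtain i where "i \<in> E" by auto
  then show ?thesis using max_abs_on_ge[OF fE \<open>i\<in>E\<close>, of f] by linarith
qed

lemma max_abs_on_attained: "finite E \<Longrightarrow> E \<noteq> {} \<Longrightarrow> \<exists>i\<in>E. max_abs_on f E = \<bar>f i\<bar>"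
proof -
  assume a: "finite E" "E \<noteq> {}"
  have "Max ((\<lambda>i. \<bar>f i\<bar>) ` E) \<in> (\<lambda>i. \<bar>f i\<bar>) ` E" using a by (intro Max_in) auto
  then obtain i where "i \<in> E" "Max ((\<lambda>i. \<bar>f i\<bar>) ` E) = \<bar>f i\<bar>" by blast
  then show ?thesis using a unfolding max_abs_on_def by auto
qed

lemma gram_diag:
  assumes "\<forall>j<p. (\<Sum>i<n. (X i j)\<^sup>2) = real n" "j < p"
  shows "gram n X j j = real n"
  using assms by (simp add: gram_def power2_eq_square)

lemma gram_off:
  assumes "0 < n" "j < p" "l < p" "j \<noteq> l"
  shows "\<bar>gram n X j l\<bar> \<le> mutual_coh n p X * real n"
proof -
  let ?S = "{\<bar>gram n X i j\<bar> / real n | i j. i < p \<and> j < p \<and> i \<noteq> j}"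
  have "?S \<subseteq> (\<lambda>(i,j). \<bar>gram n X i j\<bar> / real n) ` ({..<p} \<times> {..<p})" by auto
  hence fin: "finite ?S" by (rule finite_subset) auto
  have "\<bar>gram n X j l\<bar> / real n \<in> insert 0 ?S" using assms by blast
  hence "\<bar>gram n X j l\<bar> / real n \<le> mutual_coh n p X"
    unfolding mutual_coh_def using fin by (intro Max_ge) auto
  then show ?thesis using assms(1) by (simp add: divide_le_eq)
qed

lemma mutual_coh_nonneg: "0 \<le> mutual_coh n p X"
proof -
  let ?S = "{\<bar>gram n X i j\<bar> / real n | i j. i < p \<and> j < p \<and> i \<noteq> j}"
  have "?S \<subseteq> (\<lambda>(i,j). \<bar>gram n X i j\<bar> / real n) ` ({..<p} \<times> {..<p})" by auto
  hence fin: "finite ?S" by (rule finite_subset) auto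
  show ?thesis unfolding mutual_coh_def using fin by (intro Max_ge) auto
qed

lemma XtY:
  assumes model: "\<forall>i<n. y i = (\<Sum>j<p. X i j * bd j) + \<eta> i"
  shows "(\<Sum>i<n. X i j * y i) = (\<Sum>l<p. gram n X j l * bd l) + (\<Sum>i<n. X i j * \<eta> i)"
proof -
  have "(\<Sum>i<n. X i j * y i) = (\<Sum>i<n. (\<Sum>l<p. X i j * X i l * bd l) + X i j * \<eta> i)"
    using model by (intro sum.cong) (auto simp: sum_distrib_left algebra_simps)
  also have "\<dots> = (\<Sum>i<n. \<Sum>l<p. X i j * X i l * bd l) + (\<Sum>i<n. X i j * \<eta> i)"
    by (rule sum.distrib)
  also have "(\<Sum>i<n. \<Sum>l<p. X i j * X i l * bd l) = (\<Sum>l<p. \<Sum>i<n. X i j * X i l * bd l)"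
    by (rule sum.swap)
  also have "\<dots> = (\<Sum>l<p. gram n X j l * bd l)"
    by (simp add: gram_def sum_distrib_right)
  finally show ?thesis .
qed

lemma XtRes:
  "(\<Sum>i<n. X i j * (y i - (\<Sum>l\<in>A. X i l * c l))) = (\<Sum>i<n. X i j * y i) - (\<Sum>l\<in>A. gram n X j l * c l)"
proof -
  have "(\<Sum>i<n. X i j * (y i - (\<Sum>l\<in>A. X i l * c l))) = (\<Sum>i<n. X i j * y i) - (\<Sum>i<n. \<Sum>l\<in>A. X i j * X i l * c l)"
    by (simp add: right_diff_distrib sum_subtractf sum_distrib_left mult.assoc)
  also have "(\<Sum>i<n. \<Sum>l\<in>A. X i j * X i l * c l) = (\<Sum>l\<in>A. \<Sum>i<n. X i j * X i l * c l)"
    by (rule sum.swap)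
  also have "\<dots> = (\<Sum>l\<in>A. gram n X j l * c l)"
    by (simp add: gram_def sum_distrib_right)
  finally show ?thesis .
qed

lemma core:
  fixes n p :: nat and X :: "nat \<Rightarrow> nat \<Rightarrow> real"
    and y \<eta> bd b d b' d' :: "nat \<Rightarrow> real" and u lam lb :: real
  assumes n_pos: "0 < n"
    and col_norm: "\<forall>j<p. (\<Sum>i<n. (X i j)\<^sup>2) = real n"
    and model: "\<forall>i<n. y i = (\<Sum>j<p. X i j * bd j) + \<eta> i"
    and event: "\<forall>j<p. \<bar>\<Sum>i<n. X i j * \<eta> i\<bar> / real n \<le> u"
    and u0: "0 \<le> u" and lb: "lb \<le> lam"
    and step: "sna_step n p X y lam lb b d b' d'"
    and sub: "active_set p lam b d \<subseteq> supp_set p bd"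
  defines "A \<equiv> active_set p lam b d" and "T \<equiv> supp_set p bd" and "E \<equiv> supp_set p bd - active_set p lam b d"
    and "\<nu> \<equiv> mutual_coh n p X" and "r \<equiv> (\<lambda>l. b' l - bd l)"
    and "M \<equiv> max_abs_on bd (supp_set p bd - active_set p lam b d)" and "R \<equiv> max_abs_on (\<lambda>l. b' l - bd l) (active_set p lam b d)"
  shows "R \<le> \<nu> * card A * R + \<nu> * card E * M + u + (lam - lb)"
    and "\<forall>j\<in>A. \<bar>bd j\<bar> - R - (lam - lb) \<le> \<bar>b' j + d' j\<bar>"
    and "\<forall>j<p. j \<notin> T \<longrightarrow> \<bar>b' j + d' j\<bar> \<le> \<nu> * card E * M + \<nu> * card A * R + u"
    and "\<forall>j\<in>E. \<bar>bd j\<bar> - (\<nu> * card E * M + \<nu> * card A * R + u) \<le> \<bar>b' j + d' j\<bar>"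
    and "card T = card A + card E" and "0 \<le> R" and "0 \<le> M" and "\<forall>l\<in>E. \<bar>bd l\<bar> \<le> M"
proof -
  have ME_def: "M = max_abs_on bd E" unfolding M_def E_def ..
  have RA_def: "R = max_abs_on r A" unfolding R_def r_def A_def ..
  have finT: "finite T" unfolding T_def supp_set_def by auto
  have AT: "A \<subseteq> T" using sub unfolding A_def T_def .
  have finA: "finite A" using finT AT finite_subset by blast
  have finE: "finite E" unfolding E_def using finT T_def by auto
  have TAE: "T = A \<union> E" "A \<inter> E = {}" using AT unfolding E_def A_def T_def by auto
  show cardT: "card T = card A + card E" using TAE finA finE card_Un_disjoint by metis
  show R0: "0 \<le> R" unfolding RA_def using finA by (rule max_abs_on_nonneg)
  show M0: "0 \<le> M" unfolding ME_def using finE by (rule max_abs_on_nonneg)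
  show ME: "\<forall>l\<in>E. \<bar>bd l\<bar> \<le> M" unfolding ME_def using finE max_abs_on_ge by blast
  have RA: "\<forall>l\<in>A. \<bar>r l\<bar> \<le> R" unfolding RA_def using finA max_abs_on_ge by blast
  have nu0: "0 \<le> \<nu>" unfolding \<nu>_def by (rule mutual_coh_nonneg)
  have Tp: "\<forall>l\<in>T. l < p" "\<forall>l\<in>A. l < p" "\<forall>l\<in>E. l < p" using AT TAE unfolding T_def supp_set_def by auto
  have zero: "\<forall>l<p. l \<notin> T \<longrightarrow> bd l = 0" unfolding T_def supp_set_def by auto
  have Goff: "\<And>j l. j < p \<Longrightarrow> l < p \<Longrightarrow> j \<noteq> l \<Longrightarrow> \<bar>gram n X j l\<bar> \<le> \<nu> * real n"
    unfolding \<nu>_def using n_pos gram_off by blast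
  have Gd: "\<And>j. j < p \<Longrightarrow> gram n X j j = real n" using col_norm gram_diag by blast
  define eta where "eta j = (\<Sum>i<n. X i j * \<eta> i)" for j
  have etab: "\<And>j. j < p \<Longrightarrow> \<bar>eta j\<bar> \<le> real n * u"
    using event n_pos unfolding eta_def by (simp add: divide_le_eq mult.commute)
  have Xy: "\<And>j. j < p \<Longrightarrow> (\<Sum>i<n. X i j * y i) =
      (\<Sum>l\<in>A. gram n X j l * bd l) + (\<Sum>l\<in>E. gram n X j l * bd l) + eta j"
  proof -
    fix j assume "j < p"
    have "(\<Sum>l<p. gram n X j l * bd l) = (\<Sum>l\<in>T. gram n X j l * bd l)"
      using Tp zero by (intro sum.mono_neutral_right) auto
    also have "\<dots> = (\<Sum>l\<in>A. gram n X j l * bd l) + (\<Sum>l\<in>E. gram n X j l * bd l)"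
      using TAE finA finE by (simp add: sum.union_disjoint)
    finally show "?thesis j" using XtY[OF model, of j] unfolding eta_def by simp
  qed
  have SE: "\<And>j. j < p \<Longrightarrow> j \<notin> E \<Longrightarrow> \<bar>\<Sum>l\<in>E. gram n X j l * bd l\<bar> \<le> real (card E) * (\<nu> * real n * M)"
  proof -
    fix j assume j: "j < p" "j \<notin> E"
    show "?thesis j"
    proof (rule sum_abs_bound)
      fix l assume l: "l \<in> E"
      have "\<bar>gram n X j l * bd l\<bar> = \<bar>gram n X j l\<bar> * \<bar>bd l\<bar>" by (simp add: abs_mult)
      also have "\<dots> \<le> (\<nu> * real n) * M"
        using Goff[of j l] j l Tp ME nu0 by (intro mult_mono) auto
      finally show "\<bar>gram n X j l * bd l\<bar> \<le> \<nu> * real n * M" .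
    qed
  qed
  have SA: "\<And>j S. j < p \<Longrightarrow> S \<subseteq> A \<Longrightarrow> j \<notin> S \<Longrightarrow> \<bar>\<Sum>l\<in>S. gram n X j l * r l\<bar> \<le> real (card A) * (\<nu> * real n * R)"
  proof -
    fix j S assume j: "j < p" "S \<subseteq> A" "j \<notin> S"
    have "\<bar>\<Sum>l\<in>S. gram n X j l * r l\<bar> \<le> real (card S) * (\<nu> * real n * R)"
    proof (rule sum_abs_bound)
      fix l assume l: "l \<in> S"
      have "\<bar>gram n X j l * r l\<bar> = \<bar>gram n X j l\<bar> * \<bar>r l\<bar>" by (simp add: abs_mult)
      also have "\<dots> \<le> (\<nu> * real n) * R"
        using Goff[of j l] j l Tp RA nu0 by (intro mult_mono) auto
      finally show "\<bar>gram n X j l * r l\<bar> \<le> \<nu> * real n * R" .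
    qed
    also have "\<dots> \<le> real (card A) * (\<nu> * real n * R)"
      using j finA card_mono[OF finA j(2)] nu0 R0 by (intro mult_right_mono) auto
    finally show "?thesis j S" .
  qed
  have stepA: "\<forall>j<p. j \<notin> A \<longrightarrow> b' j = 0" "\<forall>j\<in>A. d' j = (lam - lb) * sgn (b j + d j)"
    "\<forall>j\<in>A. (\<Sum>l\<in>A. gram n X j l * b' l) = (\<Sum>i<n. X i j * y i) - real n * d' j"
    "\<forall>j<p. j \<notin> A \<longrightarrow> d' j = (\<Sum>i<n. X i j * (y i - (\<Sum>l\<in>A. X i l * b' l))) / real n"
    using step unfolding sna_step_def A_def Let_def by auto
  have dA: "\<And>j. j \<in> A \<Longrightarrow> \<bar>d' j\<bar> \<le> lam - lb"
  proof -
    fix j assume "j \<in> A"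
    have "\<bar>sgn (b j + d j)\<bar> \<le> (1::real)" by (simp add: abs_sgn_eq)
    thus "?thesis j" using stepA(2) \<open>j \<in> A\<close> lb by (simp add: abs_mult mult_left_le)
  qed
  have rb: "\<And>j. j \<in> A \<Longrightarrow> \<bar>r j\<bar> \<le> \<nu> * card A * R + \<nu> * card E * M + u + (lam - lb)"
  proof -
    fix j assume jA: "j \<in> A"
    have jp: "j < p" using jA Tp by auto
    have jE: "j \<notin> E" using jA TAE by auto
    have "(\<Sum>l\<in>A. gram n X j l * r l) = (\<Sum>l\<in>A. gram n X j l * b' l) - (\<Sum>l\<in>A. gram n X j l * bd l)"
      unfolding r_def by (simp add: right_diff_distrib sum_subtractf)
    also have "\<dots> = (\<Sum>l\<in>E. gram n X j l * bd l) + eta j - real n * d' j"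
      using stepA(3) jA Xy[OF jp] by simp
    finally have eq1: "(\<Sum>l\<in>A. gram n X j l * r l) = (\<Sum>l\<in>E. gram n X j l * bd l) + eta j - real n * d' j" .
    have "(\<Sum>l\<in>A. gram n X j l * r l) = gram n X j j * r j + (\<Sum>l\<in>A - {j}. gram n X j l * r l)"
      using finA jA by (simp add: sum.remove)
    hence eq2: "real n * r j = (\<Sum>l\<in>E. gram n X j l * bd l) + eta j - real n * d' j - (\<Sum>l\<in>A - {j}. gram n X j l * r l)"
      using eq1 Gd[OF jp] by simp
    have b1: "\<bar>\<Sum>l\<in>A - {j}. gram n X j l * r l\<bar> \<le> real (card A) * (\<nu> * real n * R)"
      using SA[of j "A - {j}"] jp by auto
    have b2: "\<bar>real n * d' j\<bar> \<le> real n * (lam - lb)" using dA[OF jA] by (simp add: abs_mult mult_left_mono)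
    have "real n * \<bar>r j\<bar> \<le> real (card E) * (\<nu> * real n * M) + real n * u + real n * (lam - lb) + real (card A) * (\<nu> * real n * R)"
      using eq2 b1 b2 SE[OF jp jE] etab[OF jp] by (simp add: abs_mult[symmetric]; linarith?)
    also have "\<dots> = real n * (\<nu> * card A * R + \<nu> * card E * M + u + (lam - lb))" by (simp add: algebra_simps)
    finally show "?thesis j" using n_pos by simp
  qed
  show "R \<le> \<nu> * card A * R + \<nu> * card E * M + u + (lam - lb)"
  proof (cases "A = {}")
    case True then show ?thesis using M0 nu0 u0 lb by (simp add: RA_def max_abs_on_def)
  next
    case False
    then obtain j where "j \<in> A" "R = \<bar>r j\<bar>" unfolding RA_def using max_abs_on_attained[OF finA] by blast
    then show ?thesis using rb by simp
  qed
  show "\<forall>j\<in>A. \<bar>bd j\<bar> - R - (lam - lb) \<le> \<bar>b' j + d' j\<bar>"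
  proof
    fix j assume jA: "j \<in> A"
    have "b' j + d' j = bd j + r j + d' j" unfolding r_def by simp
    then show "\<bar>bd j\<bar> - R - (lam - lb) \<le> \<bar>b' j + d' j\<bar>" using RA jA dA[OF jA] by auto
  qed
  have dB: "\<And>j. j < p \<Longrightarrow> j \<notin> A \<Longrightarrow> real n * (b' j + d' j) = (\<Sum>l\<in>E. gram n X j l * bd l) - (\<Sum>l\<in>A. gram n X j l * r l) + eta j"
  proof -
    fix j assume j: "j < p" "j \<notin> A"
    have "real n * (b' j + d' j) = (\<Sum>i<n. X i j * y i) - (\<Sum>l\<in>A. gram n X j l * b' l)"
      using stepA(1,4) j n_pos XtRes[where n=n and X=X and j=j and y=y and A=A and c=b'] by simp
    also have "\<dots> = (\<Sum>l\<in>E. gram n X j l * bd l) - (\<Sum>l\<in>A. gram n X j l * r l) + eta j"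
      unfolding Xy[OF j(1)] r_def by (simp add: right_diff_distrib sum_subtractf)
    finally show "?thesis j" .
  qed
  show "\<forall>j<p. j \<notin> T \<longrightarrow> \<bar>b' j + d' j\<bar> \<le> \<nu> * card E * M + \<nu> * card A * R + u"
  proof (intro allI impI)
    fix j assume j: "j < p" "j \<notin> T"
    have jA: "j \<notin> A" "j \<notin> E" using j TAE by auto
    have "real n * \<bar>b' j + d' j\<bar> \<le> real (card E) * (\<nu> * real n * M) + real (card A) * (\<nu> * real n * R) + real n * u"
      using dB[OF j(1) jA(1)] SE[OF j(1) jA(2)] SA[of j A] etab[OF j(1)] j jA
      by (simp add: abs_mult[symmetric]; linarith?)
    also have "\<dots> = real n * (\<nu> * card E * M + \<nu> * card A * R + u)" by (simp add: algebra_simps)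
    finally show "\<bar>b' j + d' j\<bar> \<le> \<nu> * card E * M + \<nu> * card A * R + u" using n_pos by simp
  qed
  show "\<forall>j\<in>E. \<bar>bd j\<bar> - (\<nu> * card E * M + \<nu> * card A * R + u) \<le> \<bar>b' j + d' j\<bar>"
  proof
    fix j assume jE: "j \<in> E"
    have jp: "j < p" using jE Tp by auto
    have jA: "j \<notin> A" using jE TAE by auto
    have "(\<Sum>l\<in>E. gram n X j l * bd l) = gram n X j j * bd j + (\<Sum>l\<in>E - {j}. gram n X j l * bd l)"
      using finE jE by (simp add: sum.remove)
    hence eq: "real n * (b' j + d' j - bd j) = (\<Sum>l\<in>E - {j}. gram n X j l * bd l) - (\<Sum>l\<in>A. gram n X j l * r l) + eta j"
      using dB[OF jp jA] Gd[OF jp] by (simp add: algebra_simps)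
    have b1: "\<bar>\<Sum>l\<in>E - {j}. gram n X j l * bd l\<bar> \<le> real (card E) * (\<nu> * real n * M)"
    proof -
      have "\<bar>\<Sum>l\<in>E - {j}. gram n X j l * bd l\<bar> \<le> real (card (E - {j})) * (\<nu> * real n * M)"
      proof (rule sum_abs_bound)
        fix l assume l: "l \<in> E - {j}"
        have "\<bar>gram n X j l * bd l\<bar> = \<bar>gram n X j l\<bar> * \<bar>bd l\<bar>" by (simp add: abs_mult)
        also have "\<dots> \<le> (\<nu> * real n) * M"
          using Goff[of j l] jp l Tp ME nu0 by (intro mult_mono) auto
        finally show "\<bar>gram n X j l * bd l\<bar> \<le> \<nu> * real n * M" .
      qed
      also have "\<dots> \<le> real (card E) * (\<nu> * real n * M)"
        using finE card_mono[OF finE, of "E - {j}"] nu0 M0 by (intro mult_right_mono) auto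
      finally show ?thesis .
    qed
    have "real n * \<bar>b' j + d' j - bd j\<bar> \<le> real (card E) * (\<nu> * real n * M) + real (card A) * (\<nu> * real n * R) + real n * u"
      using eq b1 SA[of j A] etab[OF jp] jp jA
      by (simp add: abs_mult[symmetric]; linarith?)
    also have "\<dots> = real n * (\<nu> * card E * M + \<nu> * card A * R + u)" by (simp add: algebra_simps)
    finally have "\<bar>b' j + d' j - bd j\<bar> \<le> \<nu> * card E * M + \<nu> * card A * R + u" using n_pos by simp
    then show "\<bar>bd j\<bar> - (\<nu> * card E * M + \<nu> * card A * R + u) \<le> \<bar>b' j + d' j\<bar>" by linarith
  qed
qed



lemma ar1:
  fixes L u a e R M B t :: real
  assumes "0 < L" "0 \<le> u" "30*u < L" "0 \<le> a" "0 \<le> e" "a + e \<le> 1/4" "0 \<le> R" "0 \<le> M"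
    "R \<le> a*R + e*M + u + (L/10 - 3*u)" "t \<ge> 8/5" "B \<ge> t*L" "e = 0 \<or> M < t*L"
  shows "B - R - (L/10 - 3*u) > L"
proof -
  have h: "R*(1-a) \<le> e*M + L/10" using assms by (simp add: algebra_simps)
  have key: "R*(1-a) < (t - 11/10)*L*(1-a)"
  proof (cases "e = 0")
    case True
    then have "R*(1-a) \<le> L/10" using h by simp
    moreover have "(t - 11/10)*L*(1-a) \<ge> (1/2)*L*(3/4)"
      using assms by (intro mult_mono) (auto intro: mult_right_mono)
    ultimately show ?thesis using assms by linarith
  next
    case False
    then have "M < t*L" "e > 0" using assms by auto
    have f1: "e*M < e*t*L" using \<open>M < t*L\<close> \<open>e>0\<close> by (simp add: mult.assoc)
    have f2: "a*t*L + e*t*L \<le> t*L/4"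
    proof -
      have "(a+e)*(t*L) \<le> (1/4)*(t*L)" using assms by (intro mult_right_mono) auto
      then show ?thesis by (simp add: algebra_simps)
    qed
    have f3: "t*L \<ge> 8/5*L" using assms by (intro mult_right_mono) auto
    have f4: "a*L \<ge> 0" using assms by simp
    have h2: "R - a*R \<le> e*M + L/10" using h by (simp add: algebra_simps)
    have "R - a*R < t*L - a*t*L - 11/10*L + 11/10*(a*L)" using f1 f2 f3 f4 h2 by linarith
    then show ?thesis by (simp add: algebra_simps divide_simps)
  qed
  have "1 - a > 0" using assms by simp
  then have "R < (t - 11/10)*L" using key by simp
  then show ?thesis using assms by (simp add: algebra_simps)
qed

lemma ar2:
  fixes L u a e R M t :: real
  assumes "0 < L" "0 \<le> u" "30*u < L" "0 \<le> a" "0 \<le> e" "a + e \<le> 1/4" "0 \<le> R" "0 \<le> M"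
    "R \<le> a*R + e*M + u + (L/10 - 3*u)" "M \<le> 13/5*L"
  shows "e*M + a*R + u \<le> L"
proof -
  have h2: "R - a*R \<le> e*M + L/10" using assms by (simp add: algebra_simps)
  have "a*(R - a*R) \<le> a*(e*M + L/10)" using h2 assms by (intro mult_left_mono) auto
  hence g1: "a*R - a*(a*R) \<le> a*(e*M) + (a*L)/10" by (simp add: algebra_simps)
  have g2: "e*M \<le> 13/5*(e*L)" using assms mult_left_mono[of M "13/5*L" e] by (simp add: algebra_simps)
  have "(a+e)*L \<le> (1/4)*L" using assms by (intro mult_right_mono) auto
  hence g3: "e*L + a*L \<le> L/4" by (simp add: algebra_simps)
  have g4: "a*u \<ge> 0" "a*L \<ge> 0" using assms by auto
  have "e*M + a*R + u - a*(e*M) - a*(a*R) - a*u \<le> L - a*L" using g1 g2 g3 g4 assms by linarith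
  hence "(1-a)*(e*M + a*R + u) \<le> (1-a)*L" by (simp add: algebra_simps divide_simps)
  moreover have "1 - a > 0" using assms by simp
  ultimately show ?thesis by simp
qed

lemma ar3:
  fixes L u a e R M B \<nu> :: real and cA cE :: nat
  assumes "0 < L" "0 \<le> u" "30*u < L" "0 \<le> \<nu>" "a = \<nu> * cA" "e = \<nu> * cE" "1 \<le> cA"
    "a + e \<le> 1/4" "0 \<le> R" "0 \<le> M"
    "R \<le> a*R + e*M + u + (L/10 - 3*u)" "M \<ge> 8/5*L" "B \<ge> M"
  shows "B - R - (L/10 - 3*u) > L"
proof -
  have h2: "R - a*R \<le> e*M + L/10" using assms by (simp add: algebra_simps)
  have a0: "0 \<le> a" "0 \<le> e" using assms by auto
  have "R < M - 11/10*L"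
  proof (cases "\<nu> = 0")
    case True
    then have "a = 0" "e = 0" using assms by auto
    then show ?thesis using h2 assms by simp
  next
    case False
    then have "\<nu> > 0" using assms by simp
    then have "a \<ge> \<nu>" using assms mult_left_mono[of 1 "real cA" \<nu>] by simp
    then have aL: "a*L > 0" using \<open>\<nu> > 0\<close> assms by simp
    have "(a+e)*M \<le> (1/4)*M" using assms by (intro mult_right_mono) auto
    hence g: "e*M + a*M \<le> M/4" by (simp add: algebra_simps)
    have "R - a*R < M - a*M - 11/10*L + 11/10*(a*L)" using h2 g aL assms by linarith
    hence "R*(1-a) < (M - 11/10*L)*(1-a)" by (simp add: algebra_simps divide_simps)
    moreover have "1 - a > 0" using a0 assms(8) by linarith
    ultimately show ?thesis by simp
  qed
  then show ?thesis using assms by simp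
qed

lemma ar4:
  fixes L u a e R M B :: real
  assumes "0 < L" "0 \<le> u" "30*u < L" "0 \<le> a" "0 \<le> e" "a + e \<le> 1/4" "0 \<le> R" "0 \<le> M"
    "R \<le> a*R + e*M + u + (L/10 - 3*u)" "M \<ge> 8/5*L" "B \<ge> M"
  shows "B - (e*M + a*R + u) > L"
proof -
  have h2: "R - a*R \<le> e*M + L/10" using assms by (simp add: algebra_simps)
  have "a*(R - a*R) \<le> a*(e*M + L/10)" using h2 assms by (intro mult_left_mono) auto
  hence g1: "a*R - a*(a*R) \<le> a*(e*M) + (a*L)/10" by (simp add: algebra_simps)
  have "(a+e)*M \<le> (1/4)*M" using assms by (intro mult_right_mono) auto
  hence g: "e*M + a*M \<le> M/4" by (simp add: algebra_simps)
  have g4: "a*u \<ge> 0" "a*L \<ge> 0" using assms by auto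
  have "M - e*M - a*R - u - L - a*M + a*(e*M) + a*(a*R) + a*u + a*L > 0" using g1 g g4 assms by linarith
  hence "(1-a)*(M - (e*M + a*R + u) - L) > 0" by (simp add: algebra_simps divide_simps)
  moreover have "1 - a > 0" using assms by simp
  ultimately have "M - (e*M + a*R + u) > L" by (simp add: zero_less_mult_iff)
  then show ?thesis using assms by simp
qed


theorem mainTheorem11:
  fixes n p :: nat and X :: "nat \<Rightarrow> nat \<Rightarrow> real"
    and y \<eta> \<beta>dag :: "nat \<Rightarrow> real"
    and \<sigma> lam :: real
    and b d b' d' :: "nat \<Rightarrow> real"
  assumes n_pos: "0 < n"
    and col_norm: "\<forall>j<p. (\<Sum>i<n. (X i j)\<^sup>2) = real n"
    and model: "\<forall>i<n. y i = (\<Sum>j<p. X i j * \<beta>dag j) + \<eta> i"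
    and A1: "real (card (supp_set p \<beta>dag)) * mutual_coh n p X \<le> 1/4"
    and event: "\<forall>j<p. \<bar>\<Sum>i<n. X i j * \<eta> i\<bar> / real n \<le> lambda_u \<sigma> n p"
    and lam_pos: "0 < lam"
    and lambar: "9/10 * lam + delta_u \<sigma> n p < lam"
    and step: "sna_step n p X y lam (9/10 * lam + delta_u \<sigma> n p) b d b' d'"
  shows
    "(\<forall>\<tau> \<in> {8/5, 8/5 + 1}.
        S_set p \<beta>dag lam \<tau> \<subseteq> active_set p lam b d \<and> active_set p lam b d \<subseteq> supp_set p \<beta>dag
        \<longrightarrow> S_set p \<beta>dag lam \<tau> \<subseteq> active_set p lam b' d' \<and> active_set p lam b' d' \<subseteq> supp_set p \<beta>dag)
     \<and>
     (S_set p \<beta>dag lam (8/5 + 1) \<subseteq> active_set p lam b d \<and> active_set p lam b d \<subseteq> supp_set p \<beta>dag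
        \<and> \<not> S_set p \<beta>dag lam (8/5) \<subseteq> active_set p lam b d
      \<longrightarrow> max_abs_on \<beta>dag (supp_set p \<beta>dag - active_set p lam b d)
          > max_abs_on \<beta>dag (supp_set p \<beta>dag - active_set p lam b' d'))"
proof (cases "p = 0")
  case True
  then show ?thesis by (simp add: S_set_def active_set_def supp_set_def)
next
  case False
  then have p0: "0 < p" by simp
  define u where "u = lambda_u \<sigma> n p"
  have u0: "0 \<le> u" using event p0 unfolding u_def by (meson abs_ge_zero divide_nonneg_nonneg of_nat_0_le_iff order_trans)
  have du: "delta_u \<sigma> n p = 3 * u" unfolding u_def delta_u_def ..
  have u30: "30 * u < lam" using lambar du by simp
  have lbl: "9/10 * lam + delta_u \<sigma> n p \<le> lam" using lambar by simp
  have lmlb: "lam - (9/10 * lam + delta_u \<sigma> n p) = lam/10 - 3*u" using du by simp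
  define A where "A = active_set p lam b d"
  define A' where "A' = active_set p lam b' d'"
  define T where "T = supp_set p \<beta>dag"
  define E where "E = T - A"
  define \<nu> where "\<nu> = mutual_coh n p X"
  define M where "M = max_abs_on \<beta>dag E"
  define R where "R = max_abs_on (\<lambda>l. b' l - \<beta>dag l) A"
  have nu0: "0 \<le> \<nu>" unfolding \<nu>_def by (rule mutual_coh_nonneg)
  have finT: "finite T" unfolding T_def supp_set_def by auto
  have finE: "finite E" unfolding E_def using finT by auto
  have Tp: "\<forall>l\<in>T. l < p" unfolding T_def supp_set_def by auto
  have A'iff: "\<And>j. j \<in> A' \<longleftrightarrow> j < p \<and> \<bar>b' j + d' j\<bar> > lam" unfolding A'_def active_set_def by auto
  have Sp: "\<And>t j. j \<in> S_set p \<beta>dag lam t \<longleftrightarrow> j < p \<and> \<bar>\<beta>dag j\<bar> \<ge> lam * t" unfolding S_set_def by auto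
  have Tiff: "\<And>j. j \<in> T \<longleftrightarrow> j < p \<and> \<beta>dag j \<noteq> 0" unfolding T_def supp_set_def by auto
  have C: "R \<le> \<nu> * card A * R + \<nu> * card E * M + u + (lam/10 - 3*u)"
    "\<forall>j\<in>A. \<bar>\<beta>dag j\<bar> - R - (lam/10 - 3*u) \<le> \<bar>b' j + d' j\<bar>"
    "\<forall>j<p. j \<notin> T \<longrightarrow> \<bar>b' j + d' j\<bar> \<le> \<nu> * card E * M + \<nu> * card A * R + u"
    "\<forall>j\<in>E. \<bar>\<beta>dag j\<bar> - (\<nu> * card E * M + \<nu> * card A * R + u) \<le> \<bar>b' j + d' j\<bar>"
    "card T = card A + card E" "0 \<le> R" "0 \<le> M" "\<forall>l\<in>E. \<bar>\<beta>dag l\<bar> \<le> M"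
    if sub: "A \<subseteq> T"
    using core[OF n_pos col_norm model event[folded u_def] u0 lbl step sub[unfolded A_def T_def]]
    unfolding lmlb M_def R_def E_def A_def T_def \<nu>_def by auto
  have ae: "\<nu> * card A + \<nu> * card E \<le> 1/4" if sub: "A \<subseteq> T"
    using C(5)[OF sub] A1 unfolding T_def[symmetric] \<nu>_def[symmetric] by (simp add: algebra_simps)
  have partI: "S_set p \<beta>dag lam t \<subseteq> A' \<and> A' \<subseteq> T"
    if t: "t = 8/5 \<or> t = 13/5" and SA: "S_set p \<beta>dag lam t \<subseteq> A" and sub: "A \<subseteq> T" for t
  proof -
    note CC = C[OF sub]
    have t1: "t \<ge> 8/5" "t \<le> 13/5" using t by auto
    have EM: "\<nu> * card E = 0 \<or> M < t * lam"
    proof (cases "E = {}")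
      case True then show ?thesis by simp
    next
      case False
      then obtain i where i: "i \<in> E" "M = \<bar>\<beta>dag i\<bar>" unfolding M_def using max_abs_on_attained[OF finE] by blast
      have "i \<notin> S_set p \<beta>dag lam t" using i SA unfolding E_def by auto
      moreover have "i < p" using i Tp unfolding E_def by auto
      ultimately show ?thesis using i Sp by (auto simp: mult.commute)
    qed
    have Mle: "M \<le> 13/5 * lam"
    proof (cases "E = {}")
      case True then show ?thesis using lam_pos by (simp add: M_def max_abs_on_def)
    next
      case False
      then obtain i where i: "i \<in> E" "M = \<bar>\<beta>dag i\<bar>" unfolding M_def using max_abs_on_attained[OF finE] by blast
      have "i \<notin> S_set p \<beta>dag lam t" using i SA unfolding E_def by auto
      moreover have "i < p" using i Tp unfolding E_def by auto
      ultimately have "M < lam * t" using i Sp by auto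
      moreover have "lam * t \<le> lam * (13/5)" using t1 lam_pos by (intro mult_left_mono) auto
      ultimately show ?thesis by simp
    qed
    have "S_set p \<beta>dag lam t \<subseteq> A'"
    proof
      fix j assume j: "j \<in> S_set p \<beta>dag lam t"
      have jA: "j \<in> A" using j SA by auto
      have B: "\<bar>\<beta>dag j\<bar> \<ge> t * lam" using j Sp by (simp add: mult.commute)
      have "\<bar>\<beta>dag j\<bar> - R - (lam/10 - 3*u) > lam"
        using ar1[OF lam_pos u0 u30 _ _ ae[OF sub] CC(6) CC(7) _ t1(1) B] CC(1) nu0 EM
        by (simp add: mult.commute)
      then show "j \<in> A'" using CC(2) jA Sp j A'iff by fastforce
    qed
    moreover have "A' \<subseteq> T"
    proof
      fix j assume j: "j \<in> A'"
      show "j \<in> T"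
      proof (rule ccontr)
        assume "j \<notin> T"
        moreover have "j < p" using j A'iff by auto
        ultimately have "\<bar>b' j + d' j\<bar> \<le> \<nu> * card E * M + \<nu> * card A * R + u" using CC(3) by auto
        also have "\<dots> \<le> lam"
          using ar2[OF lam_pos u0 u30 _ _ ae[OF sub] CC(6) CC(7) _ Mle] CC(1) nu0 by simp
        finally show False using j A'iff by auto
      qed
    qed
    ultimately show ?thesis ..
  qed
  have partII: "M > max_abs_on \<beta>dag (T - A')"
    if SA: "S_set p \<beta>dag lam (13/5) \<subseteq> A" and sub: "A \<subseteq> T" and nS: "\<not> S_set p \<beta>dag lam (8/5) \<subseteq> A"
  proof -
    note CC = C[OF sub]
    obtain j0 where j0: "j0 \<in> S_set p \<beta>dag lam (8/5)" "j0 \<notin> A" using nS by auto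
    have j0b: "\<bar>\<beta>dag j0\<bar> \<ge> 8/5 * lam" "j0 < p" using j0 Sp by (auto simp: mult.commute)
    then have "j0 \<in> T" using lam_pos Tiff by force
    then have "j0 \<in> E" using j0 unfolding E_def by auto
    then have M8: "M \<ge> 8/5 * lam" using CC(8) j0b by force
    have lt: "\<bar>\<beta>dag i\<bar> < M" if i: "i \<in> T - A'" for i
    proof (rule ccontr)
      assume "\<not> \<bar>\<beta>dag i\<bar> < M"
      hence iM: "\<bar>\<beta>dag i\<bar> \<ge> M" by simp
      have ip: "i < p" using i Tp by auto
      show False
      proof (cases "i \<in> A")
        case True
        have finA: "finite A" using finT sub finite_subset by blast
        have "card A \<ge> 1" using True finA by (metis One_nat_def Suc_leI card_gt_0_iff empty_iff)
        then have "\<bar>\<beta>dag i\<bar> - R - (lam/10 - 3*u) > lam"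
          using ar3[OF lam_pos u0 u30 nu0 refl refl _ ae[OF sub] CC(6) CC(7) CC(1) M8 iM] by simp
        then show False using CC(2) True ip i A'iff by fastforce
      next
        case False
        then have "i \<in> E" using i unfolding E_def by auto
        have "\<bar>\<beta>dag i\<bar> - (\<nu> * card E * M + \<nu> * card A * R + u) > lam"
          using ar4[OF lam_pos u0 u30 _ _ ae[OF sub] CC(6) CC(7) _ M8 iM] CC(1) nu0 by simp
        then show False using CC(4) \<open>i \<in> E\<close> ip i A'iff by fastforce
      qed
    qed
    show ?thesis
    proof (cases "T - A' = {}")
      case True then show ?thesis using M8 lam_pos by (simp add: max_abs_on_def)
    next
      case False
      then obtain i where "i \<in> T - A'" "max_abs_on \<beta>dag (T - A') = \<bar>\<beta>dag i\<bar>"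
        using max_abs_on_attained[of "T - A'"] finT by blast
      then show ?thesis using lt by simp
    qed
  qed
  show ?thesis
  proof
    show "\<forall>\<tau> \<in> {8/5, 8/5 + 1}.
        S_set p \<beta>dag lam \<tau> \<subseteq> active_set p lam b d \<and> active_set p lam b d \<subseteq> supp_set p \<beta>dag
        \<longrightarrow> S_set p \<beta>dag lam \<tau> \<subseteq> active_set p lam b' d' \<and> active_set p lam b' d' \<subseteq> supp_set p \<beta>dag"
      using partI unfolding A_def[symmetric] A'_def[symmetric] T_def[symmetric] by auto
    show "S_set p \<beta>dag lam (8/5 + 1) \<subseteq> active_set p lam b d \<and> active_set p lam b d \<subseteq> supp_set p \<beta>dag
        \<and> \<not> S_set p \<beta>dag lam (8/5) \<subseteq> active_set p lam b d
      \<longrightarrow> max_abs_on \<beta>dag (supp_set p \<beta>dag - active_set p lam b d)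
          > max_abs_on \<beta>dag (supp_set p \<beta>dag - active_set p lam b' d')"
      using partII unfolding A_def[symmetric] A'_def[symmetric] T_def[symmetric] M_def E_def by simp
  qed
qed

end
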